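(* Let $\lambda\geqslant\omega$ be a cardinal and $n$ a positive integer, and let $\mathscr{I}_\lambda^n$ carry any Hausdorff topology making it a topological semigroup. Then every continuous homomorphism from $\mathscr{I}_\lambda^n$ into a compact (Hausdorff) topological semigroup is annihilating (constant).
   Context: A topological semigroup is a Hausdorff space with a continuous associative multiplication. For a set $X$ of cardinality $\lambda$, $\mathscr{I}(X)$ is the semigroup of all partial one-to-one maps of $X$ (including the empty map) under composition; the rank of $\alpha$ is $|\operatorname{ran}\alpha|$, and $\mathscr{I}_\lambda^n=\{\alpha\in\mathscr{I}(X):\operatorname{rank}\alpha\leqslant n\}$. A homomorphism is annihilating if it is constant. *)

theory Defs
  imports "HOL-Analysis.Analysis"
begin

text \<open>Partial one-to-one maps of a set X are modelled as maps (option-valued functions)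
with domain and range contained in X that are injective on their domain.\<close>

definition partial_inj :: "'a set \<Rightarrow> ('a \<rightharpoonup> 'a) \<Rightarrow> bool" where
  "partial_inj X f \<longleftrightarrow> dom f \<subseteq> X \<and> ran f \<subseteq> X \<and> inj_on f (dom f)"

definition rank :: "('a \<rightharpoonup> 'a) \<Rightarrow> nat" where
  "rank f = card (ran f)"

text \<open>The semigroup I_lambda^n over X: partial injections of rank at most n.
 Finiteness of the range is required explicitly since card of an infinite set is 0.\<close>
definition In_semigroup :: "'a set \<Rightarrow> nat \<Rightarrow> ('a \<rightharpoonup> 'a) set" where
  "In_semigroup X n = {f. partial_inj X f \<and> finite (ran f) \<and> rank f \<le> n}"

text \<open>Composition: first apply f, then g (alpha beta = x -> beta(alpha x)).\<close>
definition pmult :: "('a \<rightharpoonup> 'a) \<Rightarrow> ('a \<rightharpoonup> 'a) \<Rightarrow> ('a \<rightharpoonup> 'a)" where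
  "pmult f g = g \<circ>\<^sub>m f"

definition topological_semigroup :: "'b topology \<Rightarrow> ('b \<Rightarrow> 'b \<Rightarrow> 'b) \<Rightarrow> bool" where
  "topological_semigroup T m \<longleftrightarrow>
     Hausdorff_space T \<and>
     (\<forall>x\<in>topspace T. \<forall>y\<in>topspace T. m x y \<in> topspace T) \<and>
     (\<forall>x\<in>topspace T. \<forall>y\<in>topspace T. \<forall>z\<in>topspace T. m (m x y) z = m x (m y z)) \<and>
     continuous_map (prod_topology T T) T (\<lambda>p. m (fst p) (snd p))"

definition semigroup_hom ::
  "'b set \<Rightarrow> ('b \<Rightarrow> 'b \<Rightarrow> 'b) \<Rightarrow> ('c \<Rightarrow> 'c \<Rightarrow> 'c) \<Rightarrow> ('b \<Rightarrow> 'c) \<Rightarrow> bool" where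
  "semigroup_hom A m1 m2 h \<longleftrightarrow> (\<forall>x\<in>A. \<forall>y\<in>A. h (m1 x y) = m2 (h x) (h y))"

definition annihilating :: "'b set \<Rightarrow> ('b \<Rightarrow> 'c) \<Rightarrow> bool" where
  "annihilating A h \<longleftrightarrow> (\<exists>c. \<forall>x\<in>A. h x = c)"

end

theory Submission
  imports Defs "HOL-Library.Countable_Set"
begin

lemma key_top:
  assumes ts: "topological_semigroup S m" and cs: "compact_space S"
    and a: "\<And>k::nat. a k \<in> topspace S" and b: "\<And>k. b k \<in> topspace S"
    and c: "\<And>k. m (a k) (b k) = c" and zz: "\<And>k l. k \<noteq> l \<Longrightarrow> m (a k) (b l) = z"
  shows "c = z"
proof -
  have H: "Hausdorff_space S" and cm: "continuous_map (prod_topology S S) S (\<lambda>p. m (fst p) (snd p))"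
    and cl: "\<And>x y. x \<in> topspace S \<Longrightarrow> y \<in> topspace S \<Longrightarrow> m x y \<in> topspace S"
    using ts unfolding topological_semigroup_def by auto
  have sing: "S closure_of {x} = {x}" if "x \<in> topspace S" for x
    using H that by (simp add: Hausdorff_imp_t1_space closedin_t1_singleton closure_of_closedin)
  have ctop: "c \<in> topspace S" using c[of 0] cl a b by metis
  have ztop: "z \<in> topspace S" using zz[of 0 1] cl a b by (metis zero_neq_one)
  define w where "w k = (a k, b k)" for k
  define C where "C l = prod_topology S S closure_of (w ` {l<..})" for l
  have "(\<Inter>l. C l) \<noteq> {}"
  proof (rule compact_space_imp_nest)
    show "compact_space (prod_topology S S)" using cs by (simp add: compact_space_prod_topology)
    show "closedin (prod_topology S S) (C n)" for n by (simp add: C_def)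
    show "C n \<noteq> {}" for n
    proof -
      have "w ` {n<..} \<subseteq> topspace (prod_topology S S)" using a b by (auto simp: w_def)
      then have "w ` {n<..} \<subseteq> C n" unfolding C_def by (rule closure_of_subset)
      then show ?thesis by auto
    qed
    show "decseq C" unfolding decseq_def C_def
      by (intro allI impI closure_of_mono image_mono) auto
  qed
  then obtain p q where pq: "\<And>l. (p, q) \<in> C l" by auto
  have ptop: "p \<in> topspace S" and qtop: "q \<in> topspace S"
    using pq[of 0] closure_of_subset_topspace[of "prod_topology S S"] unfolding C_def by auto
  have 1: "m p q = c"
  proof -
    have "(\<lambda>p. m (fst p) (snd p)) ` C 0 \<subseteq> S closure_of ((\<lambda>p. m (fst p) (snd p)) ` (w ` {0<..}))"
      unfolding C_def by (rule continuous_map_image_closure_subset[OF cm])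
    also have "(\<lambda>p. m (fst p) (snd p)) ` (w ` {0<..}) = {c}" using c by (auto simp: w_def image_iff intro: exI[of _ 1])
    finally show ?thesis using pq[of 0] sing[OF ctop] by auto
  qed
  have 2: "m p (b l) = z" for l
  proof -
    have "fst ` C l \<subseteq> S closure_of (fst ` (w ` {l<..}))"
      unfolding C_def by (rule continuous_map_image_closure_subset[OF continuous_map_fst])
    moreover have "fst ` (w ` {l<..}) = a ` {l<..}" by (auto simp: w_def image_image)
    ultimately have pin: "p \<in> S closure_of (a ` {l<..})" using pq[of l] by force
    have gc: "continuous_map S S (\<lambda>u. m u (b l))"
    proof -
      have "continuous_map S (prod_topology S S) (\<lambda>u. (u, b l))"
        by (intro continuous_map_pairedI continuous_map_id continuous_map_const[THEN iffD2]) (use b continuous_map_id[unfolded id_def] in blast)+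
      from continuous_map_compose[OF this cm] show ?thesis by (simp add: o_def)
    qed
    have "(\<lambda>u. m u (b l)) ` (S closure_of (a ` {l<..})) \<subseteq> S closure_of ((\<lambda>u. m u (b l)) ` (a ` {l<..}))"
      by (rule continuous_map_image_closure_subset[OF gc])
    also have "(\<lambda>u. m u (b l)) ` (a ` {l<..}) = {z}" using zz by (auto simp: image_iff intro!: bexI[of _ "Suc l"])
    finally show ?thesis using pin sing[OF ztop] by auto
  qed
  have 3: "m p q = z"
  proof -
    have "snd ` C 0 \<subseteq> S closure_of (snd ` (w ` {0<..}))"
      unfolding C_def by (rule continuous_map_image_closure_subset[OF continuous_map_snd])
    moreover have "snd ` (w ` {0<..}) = b ` {0<..}" by (auto simp: w_def image_image)
    ultimately have qin: "q \<in> S closure_of (b ` {0<..})" using pq[of 0] by force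
    have gc: "continuous_map S S (\<lambda>v. m p v)"
    proof -
      have "continuous_map S (prod_topology S S) (\<lambda>v. (p, v))"
        by (intro continuous_map_pairedI continuous_map_id continuous_map_const[THEN iffD2]) (use ptop continuous_map_id[unfolded id_def] in blast)+
      from continuous_map_compose[OF this cm] show ?thesis by (simp add: o_def)
    qed
    have "(\<lambda>v. m p v) ` (S closure_of (b ` {0<..})) \<subseteq> S closure_of ((\<lambda>v. m p v) ` (b ` {0<..}))"
      by (rule continuous_map_image_closure_subset[OF gc])
    also have "(\<lambda>v. m p v) ` (b ` {0<..}) = {z}" using 2 by (auto simp: image_iff intro!: bexI[of _ 1])
    finally show ?thesis using qin sing[OF ztop] by auto
  qed
  show ?thesis using 1 3 by simp
qed


lemma ran_eq: "ran f = (\<lambda>x. the (f x)) ` dom f"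
proof (rule set_eqI)
  fix b show "b \<in> ran f \<longleftrightarrow> b \<in> (\<lambda>x. the (f x)) ` dom f"
  proof
    assume "b \<in> ran f" then obtain a where "f a = Some b" by (auto simp: ran_def)
    then show "b \<in> (\<lambda>x. the (f x)) ` dom f" by (simp add: dom_def image_iff) (metis option.sel)
  next
    assume "b \<in> (\<lambda>x. the (f x)) ` dom f" then obtain a where "a \<in> dom f" "b = the (f a)" by auto
    then show "b \<in> ran f" by (auto simp: ran_def dom_def)
  qed
qed

lemma inj_the: "inj_on f (dom f) \<Longrightarrow> inj_on (\<lambda>x. the (f x)) (dom f)"
proof (rule inj_onI)
  fix a b assume i: "inj_on f (dom f)" and a: "a \<in> dom f" and b: "b \<in> dom f" and e: "the (f a) = the (f b)"
  from a b have "f a = Some (the (f a))" "f b = Some (the (f b))" by auto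
  with e have "f a = f b" by simp
  then show "a = b" using inj_onD[OF i _ a b] by simp
qed

lemma in_In:
  assumes "dom f \<subseteq> X" "ran f \<subseteq> X" "inj_on f (dom f)" "finite (dom f)" "card (dom f) \<le> n"
  shows "f \<in> In_semigroup X n"
proof -
  have "card (ran f) \<le> card (dom f)" unfolding ran_eq by (rule card_image_le[OF assms(4)])
  then show ?thesis using assms finite_ran[OF assms(4)] unfolding In_semigroup_def partial_inj_def rank_def by simp
qed

lemma In_facts:
  assumes "f \<in> In_semigroup X n"
  shows "dom f \<subseteq> X" "ran f \<subseteq> X" "inj_on f (dom f)" "finite (dom f)" "card (dom f) \<le> n"
proof -
  show 1: "dom f \<subseteq> X" "ran f \<subseteq> X" "inj_on f (dom f)"
    using assms unfolding In_semigroup_def partial_inj_def by simp_all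
  have fr: "finite (ran f)" and cr: "card (ran f) \<le> n" using assms unfolding In_semigroup_def rank_def by simp_all
  have ij: "inj_on (\<lambda>x. the (f x)) (dom f)" using 1(3) by (rule inj_the)
  show "finite (dom f)" using fr unfolding ran_eq by (rule finite_imageD[OF _ ij])
  show "card (dom f) \<le> n" using cr ij unfolding ran_eq by (simp add: card_image)
qed

theorem theorem9:
  fixes X :: "'a set" and n :: nat
    and T :: "('a \<rightharpoonup> 'a) topology"
    and S :: "'b topology" and m :: "'b \<Rightarrow> 'b \<Rightarrow> 'b"
    and h :: "('a \<rightharpoonup> 'a) \<Rightarrow> 'b"
  assumes "infinite X"
    and "n \<ge> 1"
    and "topspace T = In_semigroup X n"
    and "topological_semigroup T pmult"
    and "topological_semigroup S m"
    and "compact_space S"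
    and "continuous_map T S h"
    and "semigroup_hom (In_semigroup X n) pmult m h"
  shows "annihilating (In_semigroup X n) h"
proof -
  have empty_in: "Map.empty \<in> In_semigroup X n" by (rule in_In) auto
  have htop: "h f \<in> topspace S" if "f \<in> In_semigroup X n" for f
    using continuous_map_image_subset_topspace[OF assms(7)] assms(3) that by blast
  have hom: "h (pmult f g) = m (h f) (h g)" if "f \<in> In_semigroup X n" "g \<in> In_semigroup X n" for f g
    using assms(8) that unfolding semigroup_hom_def by auto
  obtain g :: "nat \<Rightarrow> 'a" where g: "inj g" "range g \<subseteq> X"
    using infinite_countable_subset[OF assms(1)] by blast
  have "h \<alpha> = h Map.empty" if al: "\<alpha> \<in> In_semigroup X n" for \<alpha>
  proof -
    define D where "D = dom \<alpha>"
    note af = In_facts[OF al, folded D_def]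
    define G where "G k d = g (to_nat_on (UNIV \<times> D) (k, d))" for k :: nat and d
    have cD: "countable (UNIV \<times> D :: (nat \<times> 'a) set)" using af(4) by (intro countable_SIGMA) (auto simp: countable_finite)
    have Ginj: "G k d = G l e \<longleftrightarrow> k = l \<and> d = e" if "d \<in> D" "e \<in> D" for k l d e
    proof -
      have "inj_on (to_nat_on (UNIV \<times> D)) (UNIV \<times> D :: (nat \<times> 'a) set)" using cD by (rule inj_on_to_nat_on)
      note inj1 = this
      show ?thesis
      proof
        assume "G k d = G l e"
        then have "to_nat_on (UNIV \<times> D) (k, d) = to_nat_on (UNIV \<times> D) (l, e)"
          unfolding G_def by (rule injD[OF g(1)])
        then have "(k, d) = (l, e)" by (rule inj_onD[OF inj1]) (use that in auto)
        then show "k = l \<and> d = e" by simp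
      qed simp
    qed
    have GX: "G k d \<in> X" for k d using g(2) unfolding G_def by auto
    have Ginjk: "inj_on (G k) D" for k using Ginj unfolding inj_on_def by auto
    define x where "x k = (\<lambda>d. if d \<in> D then Some (G k d) else None)" for k
    define y where "y k = (\<lambda>u. if u \<in> G k ` D then \<alpha> (inv_into D (G k) u) else None)" for k
    have domx: "dom (x k) = D" for k by (auto simp: x_def dom_def)
    have ranx: "ran (x k) = G k ` D" for k by (auto simp: x_def ran_def)
    have x_in: "x k \<in> In_semigroup X n" for k
    proof (rule in_In)
      show "dom (x k) \<subseteq> X" using af(1) domx by simp
      show "ran (x k) \<subseteq> X" using ranx GX by auto
      show "inj_on (x k) (dom (x k))" using Ginjk unfolding domx inj_on_def x_def by auto
      show "finite (dom (x k))" using af(4) domx by simp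
      show "card (dom (x k)) \<le> n" using af(5) domx by simp
    qed
    have invD: "u \<in> G k ` D \<Longrightarrow> inv_into D (G k) u \<in> D" for u k
      by (rule inv_into_into)
    have domy: "dom (y k) = G k ` D" for k
      using invD unfolding y_def D_def by (auto simp: dom_def)
    have rany: "ran (y k) \<subseteq> ran \<alpha>" for k
      by (auto simp: y_def ran_def split: if_splits)
    have y_in: "y k \<in> In_semigroup X n" for k
    proof (rule in_In)
      show "dom (y k) \<subseteq> X" using domy GX by auto
      show "ran (y k) \<subseteq> X" using rany af(2) by blast
      show "inj_on (y k) (dom (y k))" unfolding domy inj_on_def
      proof clarify
        fix d e assume d: "d \<in> D" and e: "e \<in> D" and eq: "y k (G k d) = y k (G k e)"
        have "\<alpha> d = \<alpha> e" using eq d e Ginjk[of k] by (simp add: y_def)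
        then have "d = e" using af(3) d e unfolding D_def inj_on_def by blast
        then show "G k d = G k e" by simp
      qed
      show "finite (dom (y k))" using af(4) domy by simp
      show "card (dom (y k)) \<le> n" using af(5) domy card_image_le[OF af(4), of "G k"] by simp
    qed
    have xy: "pmult (x k) (y k) = \<alpha>" for k
    proof
      fix d show "pmult (x k) (y k) d = \<alpha> d"
        using Ginjk[of k] by (cases "d \<in> D") (auto simp: pmult_def map_comp_def x_def y_def D_def dom_def)
    qed
    have xy0: "pmult (x k) (y l) = Map.empty" if "k \<noteq> l" for k l
    proof
      fix d show "pmult (x k) (y l) d = None"
        using Ginj that by (auto simp: pmult_def map_comp_def x_def y_def)
    qed
    show ?thesis
    proof (rule key_top[OF assms(5,6)])
      show "h (x k) \<in> topspace S" for k using htop x_in by blast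
      show "h (y k) \<in> topspace S" for k using htop y_in by blast
      show "m (h (x k)) (h (y k)) = h \<alpha>" for k using hom[OF x_in y_in, of k k] xy[of k] by simp
      show "m (h (x k)) (h (y l)) = h Map.empty" if "k \<noteq> l" for k l
        using hom[OF x_in y_in, of k l] xy0[OF that] by simp
    qed
  qed
  then show ?thesis unfolding annihilating_def by blast
qed

end
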